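(* Let $V$ be a finite nonempty set, $c\in\mathbb{R}^{P_V}$, $\hat x$ a maximally specific partial function on $P_V$, $U\subseteq V$, $\hat x'=\hat x|_{P_U}$, $c'=c|_{P_U}$, $ij\in P_U\setminus\operatorname{dom}(\hat x)$, $b\in\{0,1\}$, and $y\in\operatorname{argmax}\{\varphi_{c'}(x')\mid x'\in X_U[\hat x'],\ x'_{ij}=b\}$. Let $\tau\colon X_V[\hat x]\to X_V[\hat x]$ be a map such that $\tau(x)|_{P_{V\setminus U}}=x|_{P_{V\setminus U}}$ and $\tau(x)|_{P_U}=y$ for every $x\in X_V[\hat x]$. Let $\mathrm{lb},\mathrm{ub},\mathrm{ub}'\in\mathbb{R}$ satisfy $\mathrm{lb}\le\max\{\varphi_{c'}(x)\mid x\in X_U[\hat x'],\ x_{ij}=b\}$, $\mathrm{ub}\ge\max\{\varphi_{c'}(x)\mid x\in X_U[\hat x'],\ x_{ij}=1-b\}$, and $\mathrm{ub}'\ge\max\{\sum_{pq\in\delta(U)}c_{pq}(x_{pq}-\tau(x)_{pq})\mid x\in X_V[\hat x],\ x_{ij}=1-b\}$. If $\mathrm{lb}-\mathrm{ub}\ge\mathrm{ub}'$, then there is a maximizer $x^*$ of $\varphi_c$ over $X_V[\hat x]$ with $x^*_{ij}=b$.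
   Context: For a finite set $W$, $P_W=\{pq\in W^2\mid p\neq q\}$ and $X_W$ is the set of $x\in\{0,1\}^{P_W}$ with $x_{pq}+x_{qr}-x_{pr}\le 1$ for all pairwise distinct $p,q,r\in W$; $\varphi_c(x)=\sum_{pq\in P_W}c_{pq}x_{pq}$ for $c\in\mathbb{R}^{P_W}$. A partial function $\tilde x$ on $P_W$ is a map from $\operatorname{dom}(\tilde x)\subseteq P_W$ to $\{0,1\}$, and $X_W[\tilde x]=\{x\in X_W\mid x_{pq}=\tilde x_{pq}\ \forall pq\in\operatorname{dom}(\tilde x)\}$. A pair $pq$ is decided if $x_{pq}=x'_{pq}$ for all $x,x'\in X_W[\tilde x]$; $\tilde x$ is maximally specific if $X_W[\tilde x]\ne\emptyset$ and the decided pairs are exactly $\operatorname{dom}(\tilde x)$. $\hat x|_{P_U}$ is the partial function on $P_U$ with domain $\operatorname{dom}(\hat x)\cap P_U$ agreeing with $\hat x$; $c|_{P_U}$ and $x|_{P_U}$ are restrictions. $\delta(U)=(U\times(V\setminus U))\cup((V\setminus U)\times U)$. *)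

theory Defs
  imports Complex_Main
begin

definition PP :: "'a set \<Rightarrow> ('a \<times> 'a) set" where
  "PP W = {(p, q). p \<in> W \<and> q \<in> W \<and> p \<noteq> q}"

text \<open>X_W: 0/1 vectors indexed by PP W (represented extensionally: value 0 outside PP W)
  satisfying the triangle inequalities.\<close>
definition XX :: "'a set \<Rightarrow> ('a \<times> 'a \<Rightarrow> real) set" where
  "XX W = {x. (\<forall>pq \<in> PP W. x pq = 0 \<or> x pq = 1) \<and> (\<forall>pq. pq \<notin> PP W \<longrightarrow> x pq = 0) \<and>
     (\<forall>p \<in> W. \<forall>q \<in> W. \<forall>r \<in> W. p \<noteq> q \<and> q \<noteq> r \<and> p \<noteq> r \<longrightarrow>
        x (p, q) + x (q, r) - x (p, r) \<le> 1)}"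

definition phi :: "'a set \<Rightarrow> ('a \<times> 'a \<Rightarrow> real) \<Rightarrow> ('a \<times> 'a \<Rightarrow> real) \<Rightarrow> real" where
  "phi W c x = (\<Sum>pq \<in> PP W. c pq * x pq)"

definition partial_fn :: "'a set \<Rightarrow> ('a \<times> 'a \<rightharpoonup> real) \<Rightarrow> bool" where
  "partial_fn W xt \<longleftrightarrow> dom xt \<subseteq> PP W \<and> ran xt \<subseteq> {0, 1}"

definition XXfix :: "'a set \<Rightarrow> ('a \<times> 'a \<rightharpoonup> real) \<Rightarrow> ('a \<times> 'a \<Rightarrow> real) set" where
  "XXfix W xt = {x \<in> XX W. \<forall>pq \<in> dom xt. xt pq = Some (x pq)}"

definition decided :: "'a set \<Rightarrow> ('a \<times> 'a \<rightharpoonup> real) \<Rightarrow> 'a \<times> 'a \<Rightarrow> bool" where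
  "decided W xt pq \<longleftrightarrow> (\<forall>x \<in> XXfix W xt. \<forall>x' \<in> XXfix W xt. x pq = x' pq)"

definition maximally_specific :: "'a set \<Rightarrow> ('a \<times> 'a \<rightharpoonup> real) \<Rightarrow> bool" where
  "maximally_specific W xt \<longleftrightarrow> partial_fn W xt \<and> XXfix W xt \<noteq> {} \<and>
     {pq \<in> PP W. decided W xt pq} = dom xt"

definition cut :: "'a set \<Rightarrow> 'a set \<Rightarrow> ('a \<times> 'a) set" where
  "cut V U = (U \<times> (V - U)) \<union> ((V - U) \<times> U)"

end

theory Submission
  imports Defs
begin

lemma PP_mono: "U \<subseteq> V \<Longrightarrow> PP U \<subseteq> PP V"
  by (auto simp: PP_def)

lemma finite_PP: "finite V \<Longrightarrow> finite (PP V)"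
  by (rule finite_subset[of _ "V \<times> V"]) (auto simp: PP_def)

lemma finite_XX: assumes "finite W" shows "finite (XX W)"
proof -
  have "XX W \<subseteq> (\<lambda>S pq. if pq \<in> S then 1 else 0) ` Pow (PP W)"
  proof
    fix x assume x: "x \<in> XX W"
    show "x \<in> (\<lambda>S pq. if pq \<in> S then 1 else 0) ` Pow (PP W)"
    proof
      show "{pq \<in> PP W. x pq = 1} \<in> Pow (PP W)" by auto
      show "x = (\<lambda>pq. if pq \<in> {pq \<in> PP W. x pq = 1} then 1 else 0)"
        using x unfolding XX_def by (auto intro!: ext) (metis)
    qed
  qed
  moreover have "finite (Pow (PP W))" using finite_PP[OF assms] by simp
  ultimately show ?thesis by (meson finite_imageI finite_subset)
qed

lemma PP_split: assumes "U \<subseteq> V"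
  shows "PP V = PP U \<union> PP (V - U) \<union> cut V U"
    "PP U \<inter> PP (V - U) = {}" "(PP U \<union> PP (V - U)) \<inter> cut V U = {}"
  using assms by (auto simp: PP_def cut_def)

theorem proposition6p7:
  fixes V U :: "'a set" and c :: "'a \<times> 'a \<Rightarrow> real" and xh :: "'a \<times> 'a \<rightharpoonup> real"
    and i j :: 'a and b :: real and y :: "'a \<times> 'a \<Rightarrow> real"
    and \<tau> :: "('a \<times> 'a \<Rightarrow> real) \<Rightarrow> ('a \<times> 'a \<Rightarrow> real)" and lb ub ub' :: real
  assumes "finite V" and "V \<noteq> {}"
    and "maximally_specific V xh"
    and "U \<subseteq> V"
    and "(i, j) \<in> PP U - dom xh"
    and "b \<in> {0, 1}"
    and y_in: "y \<in> XXfix U (xh |` PP U)" and "y (i, j) = b"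
    and y_max: "\<forall>x' \<in> XXfix U (xh |` PP U). x' (i, j) = b \<longrightarrow> phi U c x' \<le> phi U c y"
    and tau_maps: "\<forall>x \<in> XXfix V xh. \<tau> x \<in> XXfix V xh"
    and tau_out: "\<forall>x \<in> XXfix V xh. \<forall>pq \<in> PP (V - U). \<tau> x pq = x pq"
    and tau_in: "\<forall>x \<in> XXfix V xh. \<forall>pq \<in> PP U. \<tau> x pq = y pq"
    and lb: "lb \<le> Max (phi U c ` {x \<in> XXfix U (xh |` PP U). x (i, j) = b})"
    and ub: "\<forall>x \<in> XXfix U (xh |` PP U). x (i, j) = 1 - b \<longrightarrow> phi U c x \<le> ub"
    and ub': "\<forall>x \<in> XXfix V xh. x (i, j) = 1 - b \<longrightarrow>
               (\<Sum>pq \<in> cut V U. c pq * (x pq - \<tau> x pq)) \<le> ub'"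
    and "lb - ub \<ge> ub'"
  shows "\<exists>xs \<in> XXfix V xh. (\<forall>x \<in> XXfix V xh. phi V c x \<le> phi V c xs) \<and> xs (i, j) = b"
proof -
  have fU: "finite U" using assms(1,4) finite_subset by blast
  let ?S = "XXfix V xh"
  have finS: "finite ?S" using finite_XX[OF assms(1)] unfolding XXfix_def by auto
  have neS: "?S \<noteq> {}" using assms(3) unfolding maximally_specific_def by auto
  have "Max (phi V c ` ?S) \<in> phi V c ` ?S" using finS neS by simp
  then obtain x0 where x0: "x0 \<in> ?S" "phi V c x0 = Max (phi V c ` ?S)" by auto
  have x0max: "\<forall>x \<in> ?S. phi V c x \<le> phi V c x0" using x0 finS by simp
  show ?thesis
  proof (cases "x0 (i, j) = b")
    case True then show ?thesis using x0 x0max by blast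
  next
    case False
    have ijV: "(i, j) \<in> PP V" using assms(5) PP_mono[OF assms(4)] by auto
    have "x0 (i,j) = 0 \<or> x0 (i,j) = 1" using x0(1) ijV unfolding XXfix_def XX_def by auto
    hence x0ij: "x0 (i, j) = 1 - b" using False assms(6) by auto
    define z where "z = \<tau> x0"
    have zS: "z \<in> ?S" using tau_maps x0 z_def by auto
    have zij: "z (i, j) = b" using tau_in x0(1) assms(5,8) z_def by auto
    define x1 where "x1 = (\<lambda>pq. if pq \<in> PP U then x0 pq else 0)"
    have x1in: "x1 \<in> XXfix U (xh |` PP U)"
    proof -
      have x0X: "x0 \<in> XX V" and x0f: "\<forall>pq \<in> dom xh. xh pq = Some (x0 pq)"
        using x0(1) unfolding XXfix_def by auto
      have "x1 \<in> XX U"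
        using x0X PP_mono[OF assms(4)] assms(4) unfolding XX_def x1_def
        by (auto simp: PP_def) (metis subsetD)
      moreover have "\<forall>pq \<in> dom (xh |` PP U). (xh |` PP U) pq = Some (x1 pq)"
        using x0f by (auto simp: x1_def restrict_map_def split: if_splits)
      ultimately show ?thesis unfolding XXfix_def by auto
    qed
    have x1ij: "x1 (i, j) = 1 - b" using x0ij assms(5) by (auto simp: x1_def)
    have phix1: "phi U c x1 = phi U c x0" unfolding phi_def x1_def by simp
    have "phi U c x1 \<le> ub" using ub x1in x1ij by auto
    have finT: "finite {x \<in> XXfix U (xh |` PP U). x (i, j) = b}"
      using finite_XX[OF fU] unfolding XXfix_def by auto
    have "Max (phi U c ` {x \<in> XXfix U (xh |` PP U). x (i, j) = b}) \<le> phi U c y"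
      using finT y_in assms(8) y_max by (subst Max_le_iff) auto
    hence lby: "lb \<le> phi U c y" using lb by linarith
    have cutb: "(\<Sum>pq \<in> cut V U. c pq * (x0 pq - z pq)) \<le> ub'"
      using ub' x0(1) x0ij z_def by auto
    have fPU: "finite (PP U)" "finite (PP (V - U))" "finite (cut V U)"
      using finite_PP fU assms(1) by (auto simp: cut_def)
    have "phi V c x0 - phi V c z = (\<Sum>pq \<in> PP V. c pq * (x0 pq - z pq))"
      unfolding phi_def by (simp add: sum_subtractf[symmetric] algebra_simps)
    also have "\<dots> = (\<Sum>pq \<in> PP U. c pq * (x0 pq - z pq)) + (\<Sum>pq \<in> PP (V - U). c pq * (x0 pq - z pq))
        + (\<Sum>pq \<in> cut V U. c pq * (x0 pq - z pq))"
      unfolding PP_split(1)[OF assms(4)]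
      using fPU PP_split(2,3)[OF assms(4)]
      by (simp add: sum.union_disjoint)
    also have "(\<Sum>pq \<in> PP (V - U). c pq * (x0 pq - z pq)) = 0"
      using tau_out x0(1) z_def by auto
    also have "(\<Sum>pq \<in> PP U. c pq * (x0 pq - z pq)) = phi U c x0 - phi U c y"
      unfolding phi_def using tau_in x0(1) z_def
      by (simp add: sum_subtractf[symmetric] algebra_simps)
    finally have "phi V c x0 - phi V c z \<le> ub - lb + ub'"
      using cutb lby \<open>phi U c x1 \<le> ub\<close> phix1 by linarith
    hence "phi V c x0 \<le> phi V c z" using \<open>lb - ub \<ge> ub'\<close> by linarith
    hence "\<forall>x \<in> ?S. phi V c x \<le> phi V c z" using x0max by (meson order_trans)
    then show ?thesis using zS zij by blast
  qed
qed

end
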